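(* Let $p$ be a probability density on $\mathbb{R}^{d}$, let $z_1, z_2, \dots$ be i.i.d. samples from $p$, let $K$ be a probability density on $\mathbb{R}^{d}$ with $\mathbb{E}_{\xi\sim K}[\xi]=0$ and $\mathbb{E}_{\xi\sim K}[\xi\xi^\top]=I$, and let $(h_n)_{n\ge1}$ be a sequence of positive bandwidths. Let $\Theta$ be a parameter set and $\hat f_\theta:\mathbb{R}^{d}\to(0,\infty)$, $\theta\in\Theta$, a family of positive functions, with $(z,\theta)\mapsto \hat f_\theta(z)$ continuous. Define $$\hat q_n^{(h_n)}(z)=\frac{1}{n}\sum_{i=1}^n \frac{1}{h_n^{d}}K\!\left(\frac{z-z_i}{h_n}\right),\quad l(\theta)=-\int \log\hat f_\theta(z)\,p(z)\,dz,\quad l_n^{(h_n)}(\theta)=-\int \log\hat f_\theta(z)\,\hat q_n^{(h_n)}(z)\,dz.$$ Suppose that for some $\epsilon>0$ there is a constant $B_p^{(\epsilon)}$ with $$\int |\log \hat f_\theta(z)|^{1+\epsilon}\,p(z)\,dz\le B_p^{(\epsilon)}<\infty\quad\text{for all }\theta\in\Theta,$$ and that there is an $n_0$ such that for all $n>n_0$ there is a constant $B_{\hat q}^{(\epsilon)}$ with $$\int |\log \hat f_\theta(z)|^{1+\epsilon}\,\hat q_n^{(h_n)}(z)\,dz\le B_{\hat q}^{(\epsilon)}<\infty\quad\text{for all }\theta\in\Theta,$$ almost surely. Then there is a constant $C_\epsilon$ such that, with probability $1$, for all $n>n_0$, $$\sup_{\theta\in\Theta}\left|l_n^{(h_n)}(\theta)-l(\theta)\right|\le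 C_\epsilon\left(\int\left|\hat q_n^{(h_n)}(z)-p(z)\right|dz\right)^{\frac{\epsilon}{1+\epsilon}}.$$
   Context: This is the setting of maximum likelihood estimation with additive data noise (noise regularization). The data points $z_i\in\mathbb{R}^{d}$, sampled i.i.d. from the unknown true density $p$, are perturbed by independent noise vectors drawn from $K$ and scaled by the bandwidth $h_n$. Drawing a data point uniformly at random and adding $h_n\xi$ with $\xi\sim K$ is the same as sampling from the kernel density estimate $\hat q_n^{(h_n)}$. The quantity $l(\theta)$ is the idealized negative expected log-likelihood under $p$. The quantity $l_n^{(h_n)}(\theta)$ is the negative expected log-likelihood under the kernel density estimate; it is a random quantity because it depends on $z_1,\dots,z_n$. *)

theory Defs
  imports "HOL-Probability.Probability"
begin

text \<open>Kernel density estimate built from the first n samples zs 0, ..., zs (n-1)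
  (corresponding to z_1,...,z_n) with kernel K and bandwidth h, on R^d with d = DIM('a).\<close>
definition kde :: "('a::euclidean_space \<Rightarrow> real) \<Rightarrow> real \<Rightarrow> (nat \<Rightarrow> 'a) \<Rightarrow> nat \<Rightarrow> 'a \<Rightarrow> real" where
  "kde K h zs n z = (1 / real n) * (\<Sum>i<n. (1 / h ^ DIM('a)) * K ((1 / h) *\<^sub>R (z - zs i)))"

definition negll :: "('t \<Rightarrow> 'a::euclidean_space \<Rightarrow> real) \<Rightarrow> ('a \<Rightarrow> real) \<Rightarrow> 't \<Rightarrow> real" where
  "negll f q \<theta> = - (\<integral>z. ln (f \<theta> z) * q z \<partial>lborel)"

end

theory Submission
  imports Defs
begin

lemma affine_nn:
  fixes K :: "'a::euclidean_space \<Rightarrow> real"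
  assumes K_meas: "K \<in> borel_measurable lborel" and h: "h > 0"
  shows "(\<integral>\<^sup>+ z. ennreal (K ((1/h) *\<^sub>R (z - a))) \<partial>lborel) = ennreal (h ^ DIM('a)) * (\<integral>\<^sup>+ z. ennreal (K z) \<partial>lborel)"
proof -
  have Km: "K \<in> borel_measurable borel" using K_meas by simp
  have "(\<integral>\<^sup>+ z. ennreal (K ((1/h) *\<^sub>R (z - a))) \<partial>lborel)
     = (\<integral>\<^sup>+ z. ennreal (K ((1/h) *\<^sub>R (z - a))) \<partial>(density (distr lborel borel (\<lambda>x. a + h *\<^sub>R x)) (\<lambda>_. \<bar>h\<bar>^DIM('a))))"
    using lborel_affine[of h a] h by simp
  also have "\<dots> = (\<integral>\<^sup>+ x. ennreal (\<bar>h\<bar>^DIM('a)) * ennreal (K x) \<partial>lborel)"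
    using h Km
    by (subst nn_integral_density) (auto simp: nn_integral_distr)
  also have "\<dots> = ennreal (h ^ DIM('a)) * (\<integral>\<^sup>+ z. ennreal (K z) \<partial>lborel)"
    using h by (subst nn_integral_cmult) (use Km in auto)
  finally show ?thesis .
qed

lemma kde_props:
  fixes K :: "'a::euclidean_space \<Rightarrow> real"
  assumes K_meas: "K \<in> borel_measurable lborel" and K_nonneg: "\<And>z. K z \<ge> 0"
    and K_int: "(\<integral>\<^sup>+ z. ennreal (K z) \<partial>lborel) = 1" and h: "h > 0"
  shows "integrable lborel (kde K h zs n)" "\<And>z. kde K h zs n z \<ge> 0"
proof -
  have Km: "K \<in> borel_measurable borel" using K_meas by simp
  have int1: "integrable lborel (\<lambda>z. K ((1/h) *\<^sub>R (z - a)))" for a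
  proof (rule integrableI_bounded)
    show "(\<lambda>z. K ((1/h) *\<^sub>R (z - a))) \<in> borel_measurable lborel" using Km by measurable
    have "(\<integral>\<^sup>+ z. ennreal (norm (K ((1/h) *\<^sub>R (z - a)))) \<partial>lborel) = ennreal (h ^ DIM('a))"
      using affine_nn[OF K_meas h, of a] K_nonneg K_int by simp
    then show "(\<integral>\<^sup>+ z. ennreal (norm (K ((1/h) *\<^sub>R (z - a)))) \<partial>lborel) < \<infinity>" by simp
  qed
  show "integrable lborel (kde K h zs n)"
    unfolding kde_def using int1 by (intro integrable_mult_right integrable_sum) auto
  show "\<And>z. kde K h zs n z \<ge> 0"
    unfolding kde_def using K_nonneg h by (auto intro!: sum_nonneg divide_nonneg_nonneg)
qed

lemma pw_bound:
  fixes g T e :: real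
  assumes T: "T > 0" and e: "e > 0"
  shows "\<bar>g\<bar> \<le> T + T powr (-e) * \<bar>g\<bar> powr (1 + e)"
proof (cases "\<bar>g\<bar> \<le> T")
  case True
  then show ?thesis by (smt (verit) mult_nonneg_nonneg powr_ge_zero)
next
  case False
  then have g0: "\<bar>g\<bar> > 0" using T by simp
  have "\<bar>g\<bar> = \<bar>g\<bar> powr (-e) * \<bar>g\<bar> powr (1 + e)"
    using g0 by (simp add: powr_add[symmetric])
  also have "\<dots> \<le> T powr (-e) * \<bar>g\<bar> powr (1 + e)"
    using False T e by (intro mult_right_mono powr_mono2') auto
  finally show ?thesis using T by simp
qed

lemma core:
  fixes M :: "'a measure" and g q p :: "'a \<Rightarrow> real" and e Bp Bq :: real
  assumes gm: "g \<in> borel_measurable M" and qi: "integrable M q" and pi: "integrable M p"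
    and q0: "\<And>z. q z \<ge> 0" and p0: "\<And>z. p z \<ge> 0" and e: "e > 0"
    and Bq: "(\<integral>\<^sup>+ z. ennreal (\<bar>g z\<bar> powr (1 + e) * q z) \<partial>M) \<le> ennreal Bq"
    and Bp: "(\<integral>\<^sup>+ z. ennreal (\<bar>g z\<bar> powr (1 + e) * p z) \<partial>M) \<le> ennreal Bp"
  shows "\<bar>(- (\<integral>z. g z * q z \<partial>M)) - (- (\<integral>z. g z * p z \<partial>M))\<bar>
      \<le> (1 + max 0 Bp + max 0 Bq) * (\<integral>z. \<bar>q z - p z\<bar> \<partial>M) powr (e / (1 + e))"
proof -
  have qm: "q \<in> borel_measurable M" and pm: "p \<in> borel_measurable M" using qi pi by auto
  define A where "A z = \<bar>g z\<bar> powr (1 + e)" for z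
  have Am: "A \<in> borel_measurable M" unfolding A_def using gm by measurable
  have A0: "A z \<ge> 0" for z unfolding A_def by simp
  have Aqi: "integrable M (\<lambda>z. A z * q z)"
  proof (rule integrableI_bounded)
    show "(\<lambda>z. A z * q z) \<in> borel_measurable M" using Am qm by measurable
    have "(\<integral>\<^sup>+ z. ennreal (norm (A z * q z)) \<partial>M) = (\<integral>\<^sup>+ z. ennreal (\<bar>g z\<bar> powr (1 + e) * q z) \<partial>M)"
      using A0 q0 by (simp add: A_def abs_mult)
    also have "\<dots> < \<infinity>" using Bq by (simp add: order.strict_trans1)
    finally show "(\<integral>\<^sup>+ z. ennreal (norm (A z * q z)) \<partial>M) < \<infinity>" .
  qed
  have Api: "integrable M (\<lambda>z. A z * p z)"
  proof (rule integrableI_bounded)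
    show "(\<lambda>z. A z * p z) \<in> borel_measurable M" using Am pm by measurable
    have "(\<integral>\<^sup>+ z. ennreal (norm (A z * p z)) \<partial>M) = (\<integral>\<^sup>+ z. ennreal (\<bar>g z\<bar> powr (1 + e) * p z) \<partial>M)"
      using A0 p0 by (simp add: A_def abs_mult)
    also have "\<dots> < \<infinity>" using Bp by (simp add: order.strict_trans1)
    finally show "(\<integral>\<^sup>+ z. ennreal (norm (A z * p z)) \<partial>M) < \<infinity>" .
  qed
  have IAq: "(\<integral>z. A z * q z \<partial>M) \<le> max 0 Bq"
  proof -
    have "ennreal (\<integral>z. A z * q z \<partial>M) = (\<integral>\<^sup>+ z. ennreal (A z * q z) \<partial>M)"
      using Aqi A0 q0 by (subst nn_integral_eq_integral) auto
    also have "\<dots> \<le> ennreal Bq" using Bq by (simp add: A_def)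
    finally show ?thesis by (smt (verit) ennreal_le_iff2 ennreal_neg)
  qed
  have IAp: "(\<integral>z. A z * p z \<partial>M) \<le> max 0 Bp"
  proof -
    have "ennreal (\<integral>z. A z * p z \<partial>M) = (\<integral>\<^sup>+ z. ennreal (A z * p z) \<partial>M)"
      using Api A0 p0 by (subst nn_integral_eq_integral) auto
    also have "\<dots> \<le> ennreal Bp" using Bp by (simp add: A_def)
    finally show ?thesis by (smt (verit) ennreal_le_iff2 ennreal_neg)
  qed
  have gA: "\<bar>g z\<bar> \<le> 1 + A z" for z
    using pw_bound[of 1 e "g z"] e by (simp add: A_def)
  have gqi: "integrable M (\<lambda>z. g z * q z)"
  proof (rule Bochner_Integration.integrable_bound[OF Bochner_Integration.integrable_add[OF qi Aqi]])
    show "(\<lambda>z. g z * q z) \<in> borel_measurable M" using gm qm by measurable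
    show "AE z in M. norm (g z * q z) \<le> norm (q z + A z * q z)"
      using gA q0 A0 by (auto simp: abs_mult intro!: AE_I2) (metis distrib_right mult_1 mult_right_mono q0)
  qed
  have gpi: "integrable M (\<lambda>z. g z * p z)"
  proof (rule Bochner_Integration.integrable_bound[OF Bochner_Integration.integrable_add[OF pi Api]])
    show "(\<lambda>z. g z * p z) \<in> borel_measurable M" using gm pm by measurable
    show "AE z in M. norm (g z * p z) \<le> norm (p z + A z * p z)"
      using gA p0 A0 by (auto simp: abs_mult intro!: AE_I2) (metis distrib_right mult_1 mult_right_mono p0)
  qed
  define D where "D z = \<bar>q z - p z\<bar>" for z
  have Di: "integrable M D" unfolding D_def using qi pi by auto
  have D0: "D z \<ge> 0" for z unfolding D_def by simp
  have gDi: "integrable M (\<lambda>z. \<bar>g z\<bar> * D z)"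
  proof -
    have "integrable M (\<lambda>z. g z * q z - g z * p z)" using gqi gpi by auto
    then have "integrable M (\<lambda>z. \<bar>g z * q z - g z * p z\<bar>)" by auto
    moreover have "(\<lambda>z. \<bar>g z * q z - g z * p z\<bar>) = (\<lambda>z. \<bar>g z\<bar> * D z)"
      by (auto simp: D_def abs_mult right_diff_distrib[symmetric])
    ultimately show ?thesis by simp
  qed
  have L: "\<bar>(- (\<integral>z. g z * q z \<partial>M)) - (- (\<integral>z. g z * p z \<partial>M))\<bar> \<le> (\<integral>z. \<bar>g z\<bar> * D z \<partial>M)"
  proof -
    have "\<bar>(- (\<integral>z. g z * q z \<partial>M)) - (- (\<integral>z. g z * p z \<partial>M))\<bar> = \<bar>\<integral>z. g z * q z - g z * p z \<partial>M\<bar>"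
      using gqi gpi by (simp add: abs_minus_commute)
    also have "\<dots> \<le> (\<integral>z. \<bar>g z * q z - g z * p z\<bar> \<partial>M)"
      by (rule integral_abs_bound)
    also have "\<dots> = (\<integral>z. \<bar>g z\<bar> * D z \<partial>M)"
      by (rule Bochner_Integration.integral_cong) (auto simp: D_def abs_mult right_diff_distrib[symmetric])
    finally show ?thesis .
  qed
  define S where "S = (\<integral>z. D z \<partial>M)"
  have S0: "S \<ge> 0" unfolding S_def using D0 by simp
  have C0: "1 + max 0 Bp + max 0 Bq \<ge> 0" by simp
  show ?thesis
  proof (cases "S = 0")
    case True
    then have "AE z in M. D z = 0"
      using integral_nonneg_eq_0_iff_AE[OF Di] D0 unfolding S_def by auto
    then have "(\<integral>z. \<bar>g z\<bar> * D z \<partial>M) = 0"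
      by (intro integral_eq_zero_AE) auto
    then show ?thesis using L True unfolding S_def D_def by simp
  next
    case False
    then have Sp: "S > 0" using S0 by simp
    define T where "T = S powr (- 1 / (1 + e))"
    have Tp: "T > 0" unfolding T_def using Sp by simp
    have pw: "\<bar>g z\<bar> * D z \<le> T * D z + T powr (-e) * (A z * q z + A z * p z)" for z
    proof -
      have "\<bar>g z\<bar> * D z \<le> (T + T powr (-e) * A z) * D z"
        using pw_bound[OF Tp e, of "g z"] D0 by (intro mult_right_mono) (auto simp: A_def)
      also have "\<dots> = T * D z + T powr (-e) * (A z * D z)" by (simp add: algebra_simps)
      also have "\<dots> \<le> T * D z + T powr (-e) * (A z * q z + A z * p z)"
      proof -
        have "D z \<le> q z + p z" using q0[of z] p0[of z] by (simp add: D_def)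
        then have "A z * D z \<le> A z * q z + A z * p z"
          using A0[of z] by (metis distrib_left mult_left_mono)
        then show ?thesis by (intro add_left_mono mult_left_mono) auto
      qed
      finally show ?thesis .
    qed
    have "(\<integral>z. \<bar>g z\<bar> * D z \<partial>M) \<le> (\<integral>z. T * D z + T powr (-e) * (A z * q z + A z * p z) \<partial>M)"
      using gDi Di Aqi Api pw by (intro integral_mono) auto
    also have "\<dots> = T * S + T powr (-e) * ((\<integral>z. A z * q z \<partial>M) + (\<integral>z. A z * p z \<partial>M))"
      using Di Aqi Api by (simp add: S_def)
    also have "\<dots> \<le> T * S + T powr (-e) * (max 0 Bq + max 0 Bp)"
      using IAq IAp by (intro add_left_mono mult_left_mono) auto
    also have "T * S = S powr (e / (1 + e))"
    proof -
      have "T * S = S powr (- 1 / (1 + e) + 1)" 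
        unfolding T_def using Sp powr_add[of S "- 1 / (1 + e)" 1] by simp
      also have "- 1 / (1 + e) + 1 = e / (1 + e)" using e by (simp add: field_simps)
      finally show ?thesis .
    qed
    also have "T powr (-e) = S powr (e / (1 + e))"
      unfolding T_def using Sp e by (simp add: powr_powr)
    finally have "(\<integral>z. \<bar>g z\<bar> * D z \<partial>M) \<le> (1 + max 0 Bp + max 0 Bq) * S powr (e / (1 + e))"
      by (simp add: algebra_simps)
    then show ?thesis using L unfolding S_def D_def by simp
  qed
qed

theorem lemma1:
  fixes M :: "'w measure"
    and Z :: "nat \<Rightarrow> 'w \<Rightarrow> 'a::euclidean_space"
    and p K :: "'a \<Rightarrow> real"
    and h :: "nat \<Rightarrow> real"
    and \<Theta> :: "'t::topological_space set"
    and f :: "'t \<Rightarrow> 'a \<Rightarrow> real"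
    and \<epsilon> Bp Bq :: real
    and n0 :: nat
  assumes M: "prob_space M"
    and p_meas: "p \<in> borel_measurable lborel"
    and p_nonneg: "\<And>z. p z \<ge> 0"
    and p_int: "(\<integral>\<^sup>+ z. ennreal (p z) \<partial>lborel) = 1"
    and Z_indep: "prob_space.indep_vars M (\<lambda>_. borel) Z UNIV"
    and Z_distr: "\<And>i. distributed M lborel (Z i) (\<lambda>z. ennreal (p z))"
    and K_meas: "K \<in> borel_measurable lborel"
    and K_nonneg: "\<And>z. K z \<ge> 0"
    and K_int: "(\<integral>\<^sup>+ z. ennreal (K z) \<partial>lborel) = 1"
    and K_mean_int: "integrable lborel (\<lambda>x. K x *\<^sub>R x)"
    and K_mean: "(\<integral>x. K x *\<^sub>R x \<partial>lborel) = 0"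
    and K_cov_int: "\<And>i j. i \<in> Basis \<Longrightarrow> j \<in> Basis \<Longrightarrow>
                       integrable lborel (\<lambda>x. K x * ((x \<bullet> i) * (x \<bullet> j)))"
    and K_cov: "\<And>i j. i \<in> Basis \<Longrightarrow> j \<in> Basis \<Longrightarrow>
                   (\<integral>x. K x * ((x \<bullet> i) * (x \<bullet> j)) \<partial>lborel) = (if i = j then 1 else 0)"
    and h_pos: "\<And>n. n \<ge> 1 \<Longrightarrow> h n > 0"
    and f_pos: "\<And>\<theta> z. \<theta> \<in> \<Theta> \<Longrightarrow> f \<theta> z > 0"
    and f_cont: "continuous_on (UNIV \<times> \<Theta>) (\<lambda>(z, \<theta>). f \<theta> z)"
    and eps: "\<epsilon> > 0"
    and Bp: "\<And>\<theta>. \<theta> \<in> \<Theta> \<Longrightarrow>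
              (\<integral>\<^sup>+ z. ennreal (\<bar>ln (f \<theta> z)\<bar> powr (1 + \<epsilon>) * p z) \<partial>lborel) \<le> ennreal Bp"
    and Bq: "AE \<omega> in M. \<forall>n > n0. \<forall>\<theta> \<in> \<Theta>.
              (\<integral>\<^sup>+ z. ennreal (\<bar>ln (f \<theta> z)\<bar> powr (1 + \<epsilon>) * kde K (h n) (\<lambda>i. Z i \<omega>) n z) \<partial>lborel)
                \<le> ennreal Bq"
  shows "\<exists>C::real. AE \<omega> in M. \<forall>n > n0. \<forall>\<theta> \<in> \<Theta>.
           \<bar>negll f (kde K (h n) (\<lambda>i. Z i \<omega>) n) \<theta> - negll f p \<theta>\<bar>
             \<le> C * (\<integral>z. \<bar>kde K (h n) (\<lambda>i. Z i \<omega>) n z - p z\<bar> \<partial>lborel) powr (\<epsilon> / (1 + \<epsilon>))"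
proof -
  have pm: "p \<in> borel_measurable lborel" using p_meas .
  have pi: "integrable lborel p"
  proof (rule integrableI_bounded)
    show "(\<integral>\<^sup>+ z. ennreal (norm (p z)) \<partial>lborel) < \<infinity>" using p_int p_nonneg by simp
  qed (rule pm)
  have gm: "(\<lambda>z. ln (f \<theta> z)) \<in> borel_measurable lborel" if th: "\<theta> \<in> \<Theta>" for \<theta>
  proof -
    have "continuous_on UNIV (\<lambda>z. (\<lambda>(z, \<theta>). f \<theta> z) (z, \<theta>))"
      by (rule continuous_on_compose2[OF f_cont]) (use th in \<open>auto intro!: continuous_intros\<close>)
    then have "(\<lambda>z. f \<theta> z) \<in> borel_measurable borel"
      by (intro borel_measurable_continuous_onI) simp
    then show ?thesis by simp
  qed
  show ?thesis
  proof (rule exI[of _ "1 + max 0 Bp + max 0 Bq"])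
    show "AE \<omega> in M. \<forall>n > n0. \<forall>\<theta> \<in> \<Theta>.
           \<bar>negll f (kde K (h n) (\<lambda>i. Z i \<omega>) n) \<theta> - negll f p \<theta>\<bar>
             \<le> (1 + max 0 Bp + max 0 Bq) * (\<integral>z. \<bar>kde K (h n) (\<lambda>i. Z i \<omega>) n z - p z\<bar> \<partial>lborel) powr (\<epsilon> / (1 + \<epsilon>))"
      using Bq
    proof (rule eventually_mono)
      fix \<omega> assume H: "\<forall>n > n0. \<forall>\<theta> \<in> \<Theta>.
              (\<integral>\<^sup>+ z. ennreal (\<bar>ln (f \<theta> z)\<bar> powr (1 + \<epsilon>) * kde K (h n) (\<lambda>i. Z i \<omega>) n z) \<partial>lborel)
                \<le> ennreal Bq"
      show "\<forall>n > n0. \<forall>\<theta> \<in> \<Theta>.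
           \<bar>negll f (kde K (h n) (\<lambda>i. Z i \<omega>) n) \<theta> - negll f p \<theta>\<bar>
             \<le> (1 + max 0 Bp + max 0 Bq) * (\<integral>z. \<bar>kde K (h n) (\<lambda>i. Z i \<omega>) n z - p z\<bar> \<partial>lborel) powr (\<epsilon> / (1 + \<epsilon>))"
      proof (intro allI impI ballI)
        fix n \<theta> assume n: "n > n0" and th: "\<theta> \<in> \<Theta>"
        have hp: "h n > 0" using h_pos n by simp
        note kp = kde_props[OF K_meas K_nonneg K_int hp, of "\<lambda>i. Z i \<omega>" n]
        show "\<bar>negll f (kde K (h n) (\<lambda>i. Z i \<omega>) n) \<theta> - negll f p \<theta>\<bar>
             \<le> (1 + max 0 Bp + max 0 Bq) * (\<integral>z. \<bar>kde K (h n) (\<lambda>i. Z i \<omega>) n z - p z\<bar> \<partial>lborel) powr (\<epsilon> / (1 + \<epsilon>))"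
          unfolding negll_def
          by (rule core[OF gm[OF th] kp(1) pi kp(2) p_nonneg eps]) (use H n th Bp in auto)
      qed
    qed
  qed
qed

end
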